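(* Let $P$ be a continuous poset with $p\not\ll p$ for all $p\in P$, and let $M$ be a persistence module over $P$. Then (i) $M$ is not lower semi-continuous if $\mathrm{supp}\,M$ has a minimal element with respect to the way-below relation; (ii) $M$ is not upper semi-continuous if $\mathrm{supp}\,M$ has a maximal element with respect to the way-below relation. In particular, (iii) a nonzero finitely generated persistence module is not lower semi-continuous, and (iv) a nonzero finitely co-generated persistence module is not upper semi-continuous.
   Context: Let $P$ be a poset (as a category, $p\to q$ iff $p\le q$). A subset is directed if nonempty and any two elements have an upper bound in it. $x\ll y$ means: for every directed $D$ whose supremum exists with $y\le\sup D$, some $d\in D$ satisfies $x\le d$. $P$ is continuous if for each $p$ the set $\{x:x\ll p\}$ is directed with supremum $p$. An element $p$ is minimal (resp. maximal) in $S\subseteq P$ with respect to the way-below relation if $p\in S$ and $S\cap\{x:x\ll p\}\subseteq\{p\}$ (resp. $S\cap\{x:p\ll x\}\subseteq\{p\}$). $k$ is a commutative ring with unity; persistence modules are functors from $P$ to $k$-modules; $\mathrm{supp}\,M=\{p:M_p\ne0\}$. $k[U_x]$, $k[D_x]$ are indicator modules of $U_x=\{y\ge x\}$, $D_x=\{y\le x\}$ ($k$ on the set, $0$ elsewhere, identity maps inside). $M$ is finitely generated if there is an epimorphism onto $M$ from a finite direct sum of modules $k[U_x]$, and finitely co-generated if there is a monomorphism from $M$ into a finite direct sum of modules $k[D_x]$. $\underline M_p=\varprojlim_{x\gg p}M_x$, $\overline M_p=\varinjlim_{x\ll p}M_x$; $M$ is upper (resp. lower) semi-continuous if the canonical morphism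 $M\to\underline M$ (resp. $\overline M\to M$) is an isomorphism. *)

theory Defs
  imports "HOL-Algebra.Module"
begin

definition directed :: "'p::order set \<Rightarrow> bool" where
  "directed D \<longleftrightarrow> D \<noteq> {} \<and> (\<forall>a\<in>D. \<forall>b\<in>D. \<exists>c\<in>D. a \<le> c \<and> b \<le> c)"

definition is_sup :: "'p::order \<Rightarrow> 'p set \<Rightarrow> bool" where
  "is_sup s D \<longleftrightarrow> (\<forall>d\<in>D. d \<le> s) \<and> (\<forall>u. (\<forall>d\<in>D. d \<le> u) \<longrightarrow> s \<le> u)"

definition way_below :: "'p::order \<Rightarrow> 'p \<Rightarrow> bool" where
  "way_below x y \<longleftrightarrow>
     (\<forall>D s. directed D \<longrightarrow> is_sup s D \<longrightarrow> y \<le> s \<longrightarrow> (\<exists>d\<in>D. x \<le> d))"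

definition continuous_poset :: "'p::order itself \<Rightarrow> bool" where
  "continuous_poset _ \<longleftrightarrow>
     (\<forall>p::'p. directed {x. way_below x p} \<and> is_sup p {x. way_below x p})"

definition wb_minimal :: "'p::order set \<Rightarrow> 'p \<Rightarrow> bool" where
  "wb_minimal S p \<longleftrightarrow> p \<in> S \<and> S \<inter> {x. way_below x p} \<subseteq> {p}"

definition wb_maximal :: "'p::order set \<Rightarrow> 'p \<Rightarrow> bool" where
  "wb_maximal S p \<longleftrightarrow> p \<in> S \<and> S \<inter> {x. way_below p x} \<subseteq> {p}"

definition module_hom ::
  "('k, 'r) ring_scheme \<Rightarrow> ('k, 'a) module \<Rightarrow> ('k, 'b) module \<Rightarrow> ('a \<Rightarrow> 'b) set" where
  "module_hom R M N = {h. h \<in> carrier M \<rightarrow> carrier N \<and>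
      (\<forall>x\<in>carrier M. \<forall>y\<in>carrier M. h (x \<oplus>\<^bsub>M\<^esub> y) = h x \<oplus>\<^bsub>N\<^esub> h y) \<and>
      (\<forall>a\<in>carrier R. \<forall>x\<in>carrier M. h (a \<odot>\<^bsub>M\<^esub> x) = a \<odot>\<^bsub>N\<^esub> h x)}"

text \<open>A persistence module over the poset 'p: a functor from 'p (as a category)
  to R-modules; M p is the module at p and f p q the structure map for p \<le> q.\<close>
definition pers_module ::
  "('k, 'r) ring_scheme \<Rightarrow> ('p::order \<Rightarrow> ('k, 'm) module) \<Rightarrow> ('p \<Rightarrow> 'p \<Rightarrow> 'm \<Rightarrow> 'm) \<Rightarrow> bool" where
  "pers_module R M f \<longleftrightarrow> cring R \<and> (\<forall>p. module R (M p)) \<and>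
     (\<forall>p q. p \<le> q \<longrightarrow> f p q \<in> module_hom R (M p) (M q)) \<and>
     (\<forall>p. \<forall>m\<in>carrier (M p). f p p m = m) \<and>
     (\<forall>p q r. p \<le> q \<longrightarrow> q \<le> r \<longrightarrow> (\<forall>m\<in>carrier (M p). f q r (f p q m) = f p r m))"

definition pers_morphism ::
  "('k, 'r) ring_scheme \<Rightarrow> ('p::order \<Rightarrow> ('k, 'a) module) \<Rightarrow> ('p \<Rightarrow> 'p \<Rightarrow> 'a \<Rightarrow> 'a)
     \<Rightarrow> ('p \<Rightarrow> ('k, 'b) module) \<Rightarrow> ('p \<Rightarrow> 'p \<Rightarrow> 'b \<Rightarrow> 'b) \<Rightarrow> ('p \<Rightarrow> 'a \<Rightarrow> 'b) \<Rightarrow> bool" where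
  "pers_morphism R M f N g \<eta> \<longleftrightarrow>
     (\<forall>p. \<eta> p \<in> module_hom R (M p) (N p)) \<and>
     (\<forall>p q. p \<le> q \<longrightarrow> (\<forall>m\<in>carrier (M p). \<eta> q (f p q m) = g p q (\<eta> p m)))"

definition supp :: "('p \<Rightarrow> ('k, 'm) module) \<Rightarrow> 'p set" where
  "supp M = {p. carrier (M p) \<noteq> {\<zero>\<^bsub>M p\<^esub>}}"

text \<open>The module R^A = direct sum of copies of R indexed by {i. A i}, realised
  as functions nat => k vanishing outside A (with componentwise operations).\<close>
definition coord_module :: "('k, 'r) ring_scheme \<Rightarrow> (nat \<Rightarrow> bool) \<Rightarrow> ('k, nat \<Rightarrow> 'k) module" where
  "coord_module R A =
     \<lparr> carrier = {c. \<forall>i. (A i \<longrightarrow> c i \<in> carrier R) \<and> (\<not> A i \<longrightarrow> c i = \<zero>\<^bsub>R\<^esub>)},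
       mult = (\<lambda>a b i. a i \<otimes>\<^bsub>R\<^esub> b i),
       one = (\<lambda>i. if A i then \<one>\<^bsub>R\<^esub> else \<zero>\<^bsub>R\<^esub>),
       zero = (\<lambda>i. \<zero>\<^bsub>R\<^esub>),
       add = (\<lambda>a b i. a i \<oplus>\<^bsub>R\<^esub> b i),
       smult = (\<lambda>r c i. r \<otimes>\<^bsub>R\<^esub> c i) \<rparr>"

text \<open>The persistence module  k[U_(xs 0)] + ... + k[U_(xs (n-1))]  (identity structure maps)\<close>
definition sum_up_modules :: "('k, 'r) ring_scheme \<Rightarrow> nat \<Rightarrow> (nat \<Rightarrow> 'p::order) \<Rightarrow> 'p \<Rightarrow> ('k, nat \<Rightarrow> 'k) module" where
  "sum_up_modules R n xs p = coord_module R (\<lambda>i. i < n \<and> xs i \<le> p)"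

definition sum_up_maps :: "('k, 'r) ring_scheme \<Rightarrow> nat \<Rightarrow> (nat \<Rightarrow> 'p::order) \<Rightarrow> 'p \<Rightarrow> 'p \<Rightarrow> (nat \<Rightarrow> 'k) \<Rightarrow> (nat \<Rightarrow> 'k)" where
  "sum_up_maps R n xs p q c = c"

text \<open>The persistence module  k[D_(xs 0)] + ... + k[D_(xs (n-1))]; the structure map
  p \<le> q is the identity on the summands with q \<le> xs i and zero on the others.\<close>
definition sum_down_modules :: "('k, 'r) ring_scheme \<Rightarrow> nat \<Rightarrow> (nat \<Rightarrow> 'p::order) \<Rightarrow> 'p \<Rightarrow> ('k, nat \<Rightarrow> 'k) module" where
  "sum_down_modules R n xs p = coord_module R (\<lambda>i. i < n \<and> p \<le> xs i)"

definition sum_down_maps :: "('k, 'r) ring_scheme \<Rightarrow> nat \<Rightarrow> (nat \<Rightarrow> 'p::order) \<Rightarrow> 'p \<Rightarrow> 'p \<Rightarrow> (nat \<Rightarrow> 'k) \<Rightarrow> (nat \<Rightarrow> 'k)" where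
  "sum_down_maps R n xs p q c = (\<lambda>i. if i < n \<and> q \<le> xs i then c i else \<zero>\<^bsub>R\<^esub>)"

text \<open>Finitely generated: an epimorphism (pointwise surjective natural transformation)
  from a finite direct sum of modules k[U_x].\<close>
definition finitely_generated ::
  "('k, 'r) ring_scheme \<Rightarrow> ('p::order \<Rightarrow> ('k, 'm) module) \<Rightarrow> ('p \<Rightarrow> 'p \<Rightarrow> 'm \<Rightarrow> 'm) \<Rightarrow> bool" where
  "finitely_generated R M f \<longleftrightarrow>
     (\<exists>n xs \<eta>. pers_morphism R (sum_up_modules R n xs) (sum_up_maps R n xs) M f \<eta> \<and>
        (\<forall>p. \<eta> p ` carrier (sum_up_modules R n xs p) = carrier (M p)))"

text \<open>Finitely co-generated: a monomorphism (pointwise injective natural transformation)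
  into a finite direct sum of modules k[D_x].\<close>
definition finitely_cogenerated ::
  "('k, 'r) ring_scheme \<Rightarrow> ('p::order \<Rightarrow> ('k, 'm) module) \<Rightarrow> ('p \<Rightarrow> 'p \<Rightarrow> 'm \<Rightarrow> 'm) \<Rightarrow> bool" where
  "finitely_cogenerated R M f \<longleftrightarrow>
     (\<exists>n xs \<eta>. pers_morphism R M f (sum_down_modules R n xs) (sum_down_maps R n xs) \<eta> \<and>
        (\<forall>p. inj_on (\<eta> p) (carrier (M p))))"

text \<open>Upper semi-continuity: for every p the canonical map
  M_p \<rightarrow> lim_{x \<gg> p} M_x is an isomorphism. The limit of R-modules is realised by
  its standard construction: the compatible families (a_x)_{x \<gg> p}.
  (The canonical map is R-linear, so it is an isomorphism iff it is bijective.)\<close>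
definition upper_semicontinuous ::
  "('p::order \<Rightarrow> ('k, 'm) module) \<Rightarrow> ('p \<Rightarrow> 'p \<Rightarrow> 'm \<Rightarrow> 'm) \<Rightarrow> bool" where
  "upper_semicontinuous M f \<longleftrightarrow>
     (\<forall>p. bij_betw (\<lambda>m. \<lambda>x\<in>{x. way_below p x}. f p x m) (carrier (M p))
        {a \<in> extensional {x. way_below p x}.
           (\<forall>x. way_below p x \<longrightarrow> a x \<in> carrier (M x)) \<and>
           (\<forall>x y. way_below p x \<longrightarrow> way_below p y \<longrightarrow> x \<le> y \<longrightarrow> f x y (a x) = a y)})"

text \<open>Lower semi-continuity: for every p the canonical map
  colim_{x \<ll> p} M_x \<rightarrow> M_p is an isomorphism. The index set {x. x \<ll> p} is directed
  (P continuous), and the directed colimit of R-modules is realised by its standard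
  construction: pairs (x, a) with a in M_x, where (x,a) ~ (y,b) iff they become equal
  in some M_z with x, y \<le> z \<ll> p. Bijectivity of the induced map
  [(x,a)] \<mapsto> f x p a is expressed by the two clauses below.\<close>
definition lower_semicontinuous ::
  "('p::order \<Rightarrow> ('k, 'm) module) \<Rightarrow> ('p \<Rightarrow> 'p \<Rightarrow> 'm \<Rightarrow> 'm) \<Rightarrow> bool" where
  "lower_semicontinuous M f \<longleftrightarrow>
     (\<forall>p. (\<forall>m\<in>carrier (M p). \<exists>x a. way_below x p \<and> a \<in> carrier (M x) \<and> f x p a = m) \<and>
          (\<forall>x y a b. way_below x p \<longrightarrow> way_below y p \<longrightarrow> a \<in> carrier (M x) \<longrightarrow> b \<in> carrier (M y)
              \<longrightarrow> f x p a = f y p b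
              \<longrightarrow> (\<exists>z. way_below z p \<and> x \<le> z \<and> y \<le> z \<and> f x z a = f y z b)))"

end

theory Submission imports Defs begin

lemma idem_zero: assumes "abelian_group N" "x \<in> carrier N" "x \<oplus>\<^bsub>N\<^esub> x = x" shows "x = \<zero>\<^bsub>N\<^esub>"
  by (metis abelian_group.l_neg abelian_group.r_neg1 assms(1,2,3))

lemma module_homD:
  assumes "h \<in> module_hom R A B"
  shows "h \<in> carrier A \<rightarrow> carrier B"
    "\<And>x y. x \<in> carrier A \<Longrightarrow> y \<in> carrier A \<Longrightarrow> h (x \<oplus>\<^bsub>A\<^esub> y) = h x \<oplus>\<^bsub>B\<^esub> h y"
proof -
  have H: "h \<in> carrier A \<rightarrow> carrier B \<and>
      (\<forall>x\<in>carrier A. \<forall>y\<in>carrier A. h (x \<oplus>\<^bsub>A\<^esub> y) = h x \<oplus>\<^bsub>B\<^esub> h y)"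
    using assms unfolding module_hom_def mem_Collect_eq by (elim conjE) (rule conjI)
  then show "h \<in> carrier A \<rightarrow> carrier B" by (rule conjunct1)
  fix x y assume "x \<in> carrier A" "y \<in> carrier A"
  then show "h (x \<oplus>\<^bsub>A\<^esub> y) = h x \<oplus>\<^bsub>B\<^esub> h y" using conjunct2[OF H] by simp
qed

lemma hom_zero:
  assumes "h \<in> module_hom R A B" "z \<in> carrier A" "z \<oplus>\<^bsub>A\<^esub> z = z" "abelian_group B"
  shows "h z = \<zero>\<^bsub>B\<^esub>"
proof -
  have c: "h z \<in> carrier B" using module_homD(1)[OF assms(1)] assms(2) by (rule funcset_mem)
  have "h (z \<oplus>\<^bsub>A\<^esub> z) = h z \<oplus>\<^bsub>B\<^esub> h z" using module_homD(2)[OF assms(1) assms(2) assms(2)] .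
  then have "h z \<oplus>\<^bsub>B\<^esub> h z = h z" using assms(3) by simp
  then show ?thesis by (rule idem_zero[OF assms(4) c])
qed

lemma module_zero: "module R N \<Longrightarrow> \<zero>\<^bsub>N\<^esub> \<in> carrier N \<and> \<zero>\<^bsub>N\<^esub> \<oplus>\<^bsub>N\<^esub> \<zero>\<^bsub>N\<^esub> = \<zero>\<^bsub>N\<^esub>"
proof -
  assume "module R N"
  then have "abelian_monoid N" using module.axioms(2) abelian_group.axioms(1) by blast
  then show ?thesis by (simp add: abelian_monoid.zero_closed abelian_monoid.r_zero)
qed

lemma wb_le: "way_below x y \<Longrightarrow> x \<le> (y::'p::order)"
proof -
  assume "way_below x y"
  moreover have "directed {y}" unfolding directed_def by auto
  moreover have "is_sup y {y}" unfolding is_sup_def by auto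
  ultimately show ?thesis unfolding way_below_def by blast
qed

lemma pm_facts:
  fixes M :: "'p::order \<Rightarrow> ('k, 'm) module"
  assumes "pers_module R M f"
  shows "module R (M p)" "p \<le> q \<Longrightarrow> f p q \<in> module_hom R (M p) (M q)"
    "p \<le> q \<Longrightarrow> f p q \<zero>\<^bsub>M p\<^esub> = \<zero>\<^bsub>M q\<^esub>"
    "p \<le> q \<Longrightarrow> m \<in> carrier (M p) \<Longrightarrow> f p q m \<in> carrier (M q)"
proof -
  have A1: "\<forall>p. module R (M p)"
    using assms unfolding pers_module_def by (elim conjE) assumption
  have A2: "\<forall>p q. p \<le> q \<longrightarrow> f p q \<in> module_hom R (M p) (M q)"
    using assms unfolding pers_module_def by (elim conjE) assumption
  note A = A1 A2
  show mp: "module R (M p)" using A(1) by (rule spec)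
  show h: "p \<le> q \<Longrightarrow> f p q \<in> module_hom R (M p) (M q)" using A(2) by simp
  show "p \<le> q \<Longrightarrow> f p q \<zero>\<^bsub>M p\<^esub> = \<zero>\<^bsub>M q\<^esub>"
  proof -
    assume pq: "p \<le> q"
    have mq: "module R (M q)" using A(1) by (rule spec)
    show ?thesis using hom_zero[OF h[OF pq] conjunct1[OF module_zero[OF mp]] conjunct2[OF module_zero[OF mp]] module.axioms(2)[OF mq]] .
  qed
  show "p \<le> q \<Longrightarrow> m \<in> carrier (M p) \<Longrightarrow> f p q m \<in> carrier (M q)"
  proof -
    assume "p \<le> q" "m \<in> carrier (M p)"
    then have "f p q \<in> carrier (M p) \<rightarrow> carrier (M q)" using h unfolding module_hom_def by blast
    then show ?thesis using \<open>m \<in> carrier (M p)\<close> by (rule funcset_mem)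
  qed
qed

lemma supp_nonzero:
  fixes M :: "'p::order \<Rightarrow> ('k, 'm) module"
  assumes "pers_module R M f" "q \<in> supp M"
  shows "\<exists>m\<in>carrier (M q). m \<noteq> \<zero>\<^bsub>M q\<^esub>"
proof -
  have z: "\<zero>\<^bsub>M q\<^esub> \<in> carrier (M q)" using module_zero[OF pm_facts(1)[OF assms(1)]] by (rule conjunct1)
  have "carrier (M q) \<noteq> {\<zero>\<^bsub>M q\<^esub>}" using assms(2) unfolding supp_def by simp
  then show ?thesis using z by blast
qed

lemma not_supp_zero:
  fixes M :: "'p::order \<Rightarrow> ('k, 'm) module"
  assumes "pers_module R M f" "q \<notin> supp M" "m \<in> carrier (M q)"
  shows "m = \<zero>\<^bsub>M q\<^esub>"
  using assms unfolding supp_def by blast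

lemma part1:
  fixes M :: "'p::order \<Rightarrow> ('k, 'm) module"
  assumes pm: "pers_module R M f" and irrefl: "\<forall>p::'p::order. \<not> way_below p p"
    and mn: "wb_minimal (supp M) p" and ls: "lower_semicontinuous M f"
  shows False
proof -
  have ps: "p \<in> supp M" using mn unfolding wb_minimal_def by blast
  obtain m where m: "m \<in> carrier (M p)" "m \<noteq> \<zero>\<^bsub>M p\<^esub>" using supp_nonzero[OF pm ps] by blast
  obtain x a where xa: "way_below x p" "a \<in> carrier (M x)" "f x p a = m"
    using ls m unfolding lower_semicontinuous_def by blast
  have xp: "x \<le> p" using wb_le xa(1) .
  have "x \<in> supp M"
  proof (rule ccontr)
    assume "x \<notin> supp M"
    then have "a = \<zero>\<^bsub>M x\<^esub>" using not_supp_zero[OF pm] xa(2) by blast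
    then show False using pm_facts(3)[OF pm xp] xa m by simp
  qed
  then have "x = p" using mn xa(1) unfolding wb_minimal_def by blast
  then show False using irrefl xa(1) by blast
qed

lemma part2:
  fixes M :: "'p::order \<Rightarrow> ('k, 'm) module"
  assumes pm: "pers_module R M f" and irrefl: "\<forall>p::'p::order. \<not> way_below p p"
    and mx: "wb_maximal (supp M) p" and us: "upper_semicontinuous M f"
  shows False
proof -
  have ps: "p \<in> supp M" using mx unfolding wb_maximal_def by blast
  obtain m where m: "m \<in> carrier (M p)" "m \<noteq> \<zero>\<^bsub>M p\<^esub>" using supp_nonzero[OF pm ps] by blast
  have z: "\<zero>\<^bsub>M p\<^esub> \<in> carrier (M p)" using module_zero[OF pm_facts(1)[OF pm]] by blast
  have inj: "inj_on (\<lambda>m. \<lambda>x\<in>{x. way_below p x}. f p x m) (carrier (M p))"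
    using us unfolding upper_semicontinuous_def bij_betw_def by blast
  have eq: "f p x m = f p x \<zero>\<^bsub>M p\<^esub>" if "way_below p x" for x
  proof -
    have px: "p \<le> x" using wb_le that .
    have "x \<noteq> p" using irrefl that by blast
    then have "x \<notin> supp M" using mx that unfolding wb_maximal_def by blast
    then have "f p x m = \<zero>\<^bsub>M x\<^esub>" using not_supp_zero[OF pm _ pm_facts(4)[OF pm px m(1)]] by blast
    then show ?thesis using pm_facts(3)[OF pm px] by simp
  qed
  have "(\<lambda>x\<in>{x. way_below p x}. f p x m) = (\<lambda>x\<in>{x. way_below p x}. f p x \<zero>\<^bsub>M p\<^esub>)"
    using eq by (intro restrict_ext) auto
  then have "m = \<zero>\<^bsub>M p\<^esub>" using inj_onD[OF inj _ m(1) z] by blast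
  then show False using m by blast
qed

lemma coord_carrier: "v \<in> carrier (coord_module R A) \<longleftrightarrow> (\<forall>i. (A i \<longrightarrow> v i \<in> carrier R) \<and> (\<not> A i \<longrightarrow> v i = \<zero>\<^bsub>R\<^esub>))"
  by (simp add: coord_module_def)
lemma coord_zero: "\<zero>\<^bsub>coord_module R A\<^esub> = (\<lambda>i. \<zero>\<^bsub>R\<^esub>)"
  by (simp add: coord_module_def)
lemma coord_add: "a \<oplus>\<^bsub>coord_module R A\<^esub> b = (\<lambda>i. a i \<oplus>\<^bsub>R\<^esub> b i)"
  by (simp add: coord_module_def)

lemma pers_morphismD:
  assumes "pers_morphism R M f N g \<eta>"
  shows "\<eta> p \<in> module_hom R (M p) (N p)"
    "p \<le> q \<Longrightarrow> m \<in> carrier (M p) \<Longrightarrow> \<eta> q (f p q m) = g p q (\<eta> p m)"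
proof -
  have A1: "\<forall>p. \<eta> p \<in> module_hom R (M p) (N p)"
    using assms unfolding pers_morphism_def by (elim conjE) assumption
  have A2: "\<forall>p q. p \<le> q \<longrightarrow> (\<forall>m\<in>carrier (M p). \<eta> q (f p q m) = g p q (\<eta> p m))"
    using assms unfolding pers_morphism_def by (elim conjE) assumption
  show "\<eta> p \<in> module_hom R (M p) (N p)" using A1 by (rule spec)
  show "p \<le> q \<Longrightarrow> m \<in> carrier (M p) \<Longrightarrow> \<eta> q (f p q m) = g p q (\<eta> p m)" using A2 by simp
qed

lemma pm_agR:
  assumes "pers_module R M f" shows "abelian_group R"
proof -
  have "cring R" using assms unfolding pers_module_def by (elim conjE) assumption
  then show ?thesis by (rule ring.is_abelian_group[OF cring.axioms(1)])
qed

lemma coord_zero_hom: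
  assumes "abelian_group R" "h \<in> module_hom R (coord_module R A) B" "abelian_group B"
  shows "h (\<lambda>i. \<zero>\<^bsub>R\<^esub>) = \<zero>\<^bsub>B\<^esub>"
proof -
  have am: "abelian_monoid R" using assms(1) by (rule abelian_group.axioms(1))
  have z: "\<zero>\<^bsub>R\<^esub> \<in> carrier R" using am by (rule abelian_monoid.zero_closed)
  have "(\<lambda>i::nat. \<zero>\<^bsub>R\<^esub>) \<in> carrier (coord_module R A)" using z by (simp add: coord_carrier)
  moreover have "(\<lambda>i::nat. \<zero>\<^bsub>R\<^esub>) \<oplus>\<^bsub>coord_module R A\<^esub> (\<lambda>i. \<zero>\<^bsub>R\<^esub>) = (\<lambda>i. \<zero>\<^bsub>R\<^esub>)"
    using abelian_monoid.r_zero[OF am z] by (simp add: coord_add)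
  ultimately show ?thesis using hom_zero[OF assms(2) _ _ assms(3)] by blast
qed

lemma coord_idem:
  assumes "abelian_group R" "v \<in> carrier (coord_module R A)" "v \<oplus>\<^bsub>coord_module R A\<^esub> v = v"
  shows "v = (\<lambda>i. \<zero>\<^bsub>R\<^esub>)"
proof
  fix i
  show "v i = \<zero>\<^bsub>R\<^esub>"
  proof (cases "A i")
    case True
    then have c: "v i \<in> carrier R" using assms(2) by (simp add: coord_carrier)
    have "v i \<oplus>\<^bsub>R\<^esub> v i = v i" using fun_cong[OF assms(3), of i] by (simp add: coord_add)
    then show ?thesis by (rule idem_zero[OF assms(1) c])
  next
    case False
    then show ?thesis using assms(2) by (simp add: coord_carrier)
  qed
qed

lemma hom_zero_coord_target:
  assumes "abelian_group R" "h \<in> module_hom R A (coord_module R B)" "module R A"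
  shows "h \<zero>\<^bsub>A\<^esub> = (\<lambda>i. \<zero>\<^bsub>R\<^esub>)"
proof -
  note mz = module_zero[OF assms(3)]
  have c: "h \<zero>\<^bsub>A\<^esub> \<in> carrier (coord_module R B)" using module_homD(1)[OF assms(2)] conjunct1[OF mz] by (rule funcset_mem)
  have "h (\<zero>\<^bsub>A\<^esub> \<oplus>\<^bsub>A\<^esub> \<zero>\<^bsub>A\<^esub>) = h \<zero>\<^bsub>A\<^esub> \<oplus>\<^bsub>coord_module R B\<^esub> h \<zero>\<^bsub>A\<^esub>"
    using module_homD(2)[OF assms(2) conjunct1[OF mz] conjunct1[OF mz]] .
  then have "h \<zero>\<^bsub>A\<^esub> \<oplus>\<^bsub>coord_module R B\<^esub> h \<zero>\<^bsub>A\<^esub> = h \<zero>\<^bsub>A\<^esub>" using conjunct2[OF mz] by simp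
  then show ?thesis by (rule coord_idem[OF assms(1) c])
qed


lemma part4_key:
  fixes M :: "'p::order \<Rightarrow> ('k, 'm) module"
  assumes pm: "pers_module R M f"
    and mor: "pers_morphism R M f (sum_down_modules R n xs) (sum_down_maps R n xs) \<eta>"
    and inj: "\<forall>p. inj_on (\<eta> p) (carrier (M p))"
    and qs: "q \<in> supp M"
  shows "\<exists>i<n. q \<le> xs i \<and> xs i \<in> supp M"
proof -
  have agR: "abelian_group R" using pm by (rule pm_agR)
  obtain m where m: "m \<in> carrier (M q)" "m \<noteq> \<zero>\<^bsub>M q\<^esub>" using supp_nonzero[OF pm qs] by blast
  have z: "\<zero>\<^bsub>M q\<^esub> \<in> carrier (M q)" using module_zero[OF pm_facts(1)[OF pm]] by (rule conjunct1)
  have hq: "\<eta> q \<in> module_hom R (M q) (coord_module R (\<lambda>i. i < n \<and> q \<le> xs i))"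
    using pers_morphismD(1)[OF mor, of q] unfolding sum_down_modules_def .
  have e0: "\<eta> q \<zero>\<^bsub>M q\<^esub> = (\<lambda>i. \<zero>\<^bsub>R\<^esub>)" by (rule hom_zero_coord_target[OF agR hq pm_facts(1)[OF pm]])
  have "\<eta> q m \<noteq> \<eta> q \<zero>\<^bsub>M q\<^esub>"
  proof
    assume "\<eta> q m = \<eta> q \<zero>\<^bsub>M q\<^esub>"
    then have "m = \<zero>\<^bsub>M q\<^esub>" using inj_onD[OF spec[OF inj, of q] _ m(1) z] by blast
    then show False using m(2) by blast
  qed
  then obtain i where i: "\<eta> q m i \<noteq> \<zero>\<^bsub>R\<^esub>" using e0 by fastforce
  have vc: "\<eta> q m \<in> carrier (coord_module R (\<lambda>i. i < n \<and> q \<le> xs i))"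
    using module_homD(1)[OF hq] m(1) by (rule funcset_mem)
  have iq: "i < n \<and> q \<le> xs i"
  proof (rule ccontr)
    assume "\<not> (i < n \<and> q \<le> xs i)"
    then have "\<eta> q m i = \<zero>\<^bsub>R\<^esub>" using vc by (simp add: coord_carrier)
    then show False using i by blast
  qed
  have "xs i \<in> supp M"
  proof (rule ccontr)
    assume ns: "xs i \<notin> supp M"
    have w: "f q (xs i) m \<in> carrier (M (xs i))" using pm_facts(4)[OF pm _ m(1)] iq by blast
    then have w0: "f q (xs i) m = \<zero>\<^bsub>M (xs i)\<^esub>" using not_supp_zero[OF pm ns] by blast
    have hx: "\<eta> (xs i) \<in> module_hom R (M (xs i)) (coord_module R (\<lambda>j. j < n \<and> xs i \<le> xs j))"
      using pers_morphismD(1)[OF mor, of "xs i"] unfolding sum_down_modules_def .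
    have "\<eta> (xs i) (f q (xs i) m) = sum_down_maps R n xs q (xs i) (\<eta> q m)"
      using pers_morphismD(2)[OF mor _ m(1)] iq by blast
    then have "\<eta> (xs i) \<zero>\<^bsub>M (xs i)\<^esub> i = \<eta> q m i" using w0 iq by (simp add: sum_down_maps_def)
    moreover have "\<eta> (xs i) \<zero>\<^bsub>M (xs i)\<^esub> = (\<lambda>i. \<zero>\<^bsub>R\<^esub>)"
      by (rule hom_zero_coord_target[OF agR hx pm_facts(1)[OF pm]])
    ultimately show False using i by simp
  qed
  then show ?thesis using iq by blast
qed


lemma part4:
  fixes M :: "'p::order \<Rightarrow> ('k, 'm) module"
  assumes pm: "pers_module R M f" and fc: "finitely_cogenerated R M f" and ne: "supp M \<noteq> {}"
  shows "\<exists>p. wb_maximal (supp M) p"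
proof -
  obtain n xs \<eta> where mor: "pers_morphism R M f (sum_down_modules R n xs) (sum_down_maps R n xs) \<eta>"
    and inj: "\<forall>p. inj_on (\<eta> p) (carrier (M p))"
    using fc unfolding finitely_cogenerated_def by blast
  note K = part4_key[OF pm mor inj]
  define S where "S = xs ` {i. i < n \<and> xs i \<in> supp M}"
  have fin: "finite S" unfolding S_def by simp
  obtain q where q: "q \<in> supp M" using ne by blast
  have "S \<noteq> {}" using K[OF q] unfolding S_def by blast
  then obtain p where p: "p \<in> S" "\<forall>b\<in>S. p \<le> b \<longrightarrow> p = b" using finite_has_maximal[OF fin] by blast
  have ps: "p \<in> supp M" using p(1) unfolding S_def by blast
  have "supp M \<inter> {x. way_below p x} \<subseteq> {p}"
  proof
    fix y assume y: "y \<in> supp M \<inter> {x. way_below p x}"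
    then have py: "p \<le> y" using wb_le by blast
    obtain i where i: "i < n" "y \<le> xs i" "xs i \<in> supp M" using K y by blast
    then have "xs i \<in> S" unfolding S_def by blast
    moreover have "p \<le> xs i" using py i(2) by (rule order_trans)
    ultimately have "p = xs i" using p(2) by blast
    then have "y = p" using py i(2) by simp
    then show "y \<in> {p}" by simp
  qed
  then show ?thesis using ps unfolding wb_maximal_def by blast
qed


lemma part3_key:
  fixes M :: "'p::order \<Rightarrow> ('k, 'm) module"
  assumes pm: "pers_module R M f"
    and mor: "pers_morphism R (sum_up_modules R n xs) (sum_up_maps R n xs) M f \<eta>"
    and surj: "\<forall>p. \<eta> p ` carrier (sum_up_modules R n xs p) = carrier (M p)"
    and qs: "q \<in> supp M"
  shows "\<exists>i<n. xs i \<le> q \<and> xs i \<in> supp M"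
proof (rule ccontr)
  assume nex: "\<not> (\<exists>i<n. xs i \<le> q \<and> xs i \<in> supp M)"
  have agR: "abelian_group R" using pm by (rule pm_agR)
  have amR: "abelian_monoid R" using agR by (rule abelian_group.axioms(1))
  have zR: "\<zero>\<^bsub>R\<^esub> \<in> carrier R" using amR by (rule abelian_monoid.zero_closed)
  have mq: "module R (M q)" using pm by (rule pm_facts(1))
  have agq: "abelian_group (M q)" using mq by (rule module.axioms(2))
  have mzq: "\<zero>\<^bsub>M q\<^esub> \<in> carrier (M q) \<and> \<zero>\<^bsub>M q\<^esub> \<oplus>\<^bsub>M q\<^esub> \<zero>\<^bsub>M q\<^esub> = \<zero>\<^bsub>M q\<^esub>"
    by (rule module_zero[OF mq])
  define A where "A = (\<lambda>i. i < n \<and> xs i \<le> q)"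
  have hq: "\<eta> q \<in> module_hom R (coord_module R A) (M q)"
    using pers_morphismD(1)[OF mor, of q] unfolding sum_up_modules_def A_def .
  have all0: "\<eta> q c = \<zero>\<^bsub>M q\<^esub>" if c: "c \<in> carrier (coord_module R A)" for c
  proof -
    define cB where "cB = (\<lambda>B i. if i \<in> B then c i else \<zero>\<^bsub>R\<^esub>)"
    have cBc: "cB B \<in> carrier (coord_module R A)" if "B \<subseteq> {i. A i}" for B
      using c that zR unfolding cB_def coord_carrier by auto
    have single: "\<eta> q (cB {j}) = \<zero>\<^bsub>M q\<^esub>" if j: "A j" for j
    proof -
      have jn: "j < n" "xs j \<le> q" using j unfolding A_def by auto
      have ns: "xs j \<notin> supp M" using nex jn by blast
      have cj: "cB {j} \<in> carrier (sum_up_modules R n xs (xs j))"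
        using c j zR unfolding cB_def coord_carrier sum_up_modules_def A_def by auto
      have hj: "\<eta> (xs j) \<in> carrier (sum_up_modules R n xs (xs j)) \<rightarrow> carrier (M (xs j))"
        using pers_morphismD(1)[OF mor, of "xs j"] by (rule module_homD(1))
      have "\<eta> (xs j) (cB {j}) \<in> carrier (M (xs j))" using hj cj by (rule funcset_mem)
      then have e0: "\<eta> (xs j) (cB {j}) = \<zero>\<^bsub>M (xs j)\<^esub>" using not_supp_zero[OF pm ns] by blast
      have "\<eta> q (sum_up_maps R n xs (xs j) q (cB {j})) = f (xs j) q (\<eta> (xs j) (cB {j}))"
        using pers_morphismD(2)[OF mor jn(2) cj] .
      then show ?thesis using e0 pm_facts(3)[OF pm jn(2)] by (simp add: sum_up_maps_def)
    qed
    have ind: "finite B \<Longrightarrow> B \<subseteq> {i. A i} \<Longrightarrow> \<eta> q (cB B) = \<zero>\<^bsub>M q\<^esub>" for B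
    proof (induction B rule: finite_induct)
      case empty
      have "cB {} = (\<lambda>i. \<zero>\<^bsub>R\<^esub>)" unfolding cB_def by simp
      then show ?case using coord_zero_hom[OF agR hq agq] by simp
    next
      case (insert j B)
      have jA: "A j" and BA: "B \<subseteq> {i. A i}" using insert.prems by auto
      have eq: "cB (insert j B) = cB B \<oplus>\<^bsub>coord_module R A\<^esub> cB {j}"
      proof
        fix i
        show "cB (insert j B) i = (cB B \<oplus>\<^bsub>coord_module R A\<^esub> cB {j}) i"
        proof (cases "i = j")
          case True
          have "c j \<in> carrier R" using c jA by (simp add: coord_carrier)
          then show ?thesis using True insert.hyps(2) abelian_monoid.l_zero[OF amR] unfolding cB_def coord_add by simp
        next
          case False
          show ?thesis
          proof (cases "i \<in> B")
            case True
            then have "c i \<in> carrier R" using c BA by (simp add: coord_carrier subset_eq)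
            then show ?thesis using True False abelian_monoid.r_zero[OF amR] unfolding cB_def coord_add by simp
          next
            case F2: False
            then show ?thesis using False abelian_monoid.r_zero[OF amR zR] unfolding cB_def coord_add by simp
          qed
        qed
      qed
      have "\<eta> q (cB (insert j B)) = \<eta> q (cB B) \<oplus>\<^bsub>M q\<^esub> \<eta> q (cB {j})"
        unfolding eq using module_homD(2)[OF hq cBc[OF BA]] cBc jA by simp
      also have "\<dots> = \<zero>\<^bsub>M q\<^esub>" using insert.IH[OF BA] single[OF jA] mzq by simp
      finally show ?case .
    qed
    have "cB {i. A i} = c" unfolding cB_def using c by (auto simp: coord_carrier)
    moreover have "finite {i. A i}" unfolding A_def by simp
    ultimately show ?thesis using ind by fastforce
  qed
  have "carrier (M q) \<subseteq> {\<zero>\<^bsub>M q\<^esub>}"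
  proof
    fix m assume "m \<in> carrier (M q)"
    then obtain c where "c \<in> carrier (sum_up_modules R n xs q)" "m = \<eta> q c"
      using surj by blast
    then show "m \<in> {\<zero>\<^bsub>M q\<^esub>}" using all0 unfolding sum_up_modules_def A_def by simp
  qed
  then have "carrier (M q) = {\<zero>\<^bsub>M q\<^esub>}" using mzq by blast
  then show False using qs unfolding supp_def by simp
qed


lemma part3:
  fixes M :: "'p::order \<Rightarrow> ('k, 'm) module"
  assumes pm: "pers_module R M f" and fg: "finitely_generated R M f" and ne: "supp M \<noteq> {}"
  shows "\<exists>p. wb_minimal (supp M) p"
proof -
  obtain n xs \<eta> where mor: "pers_morphism R (sum_up_modules R n xs) (sum_up_maps R n xs) M f \<eta>"
    and surj: "\<forall>p. \<eta> p ` carrier (sum_up_modules R n xs p) = carrier (M p)"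
    using fg unfolding finitely_generated_def by blast
  note K = part3_key[OF pm mor surj]
  define S where "S = xs ` {i. i < n \<and> xs i \<in> supp M}"
  have fin: "finite S" unfolding S_def by simp
  obtain q where q: "q \<in> supp M" using ne by blast
  have "S \<noteq> {}" using K[OF q] unfolding S_def by blast
  then obtain p where p: "p \<in> S" "\<forall>b\<in>S. b \<le> p \<longrightarrow> p = b" using finite_has_minimal[OF fin] by blast
  have ps: "p \<in> supp M" using p(1) unfolding S_def by blast
  have "supp M \<inter> {x. way_below x p} \<subseteq> {p}"
  proof
    fix y assume y: "y \<in> supp M \<inter> {x. way_below x p}"
    then have py: "y \<le> p" using wb_le by blast
    obtain i where i: "i < n" "xs i \<le> y" "xs i \<in> supp M" using K y by blast
    then have "xs i \<in> S" unfolding S_def by blast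
    moreover have "xs i \<le> p" using i(2) py by (rule order_trans)
    ultimately have "p = xs i" using p(2) by blast
    then have "y = p" using py i(2) by simp
    then show "y \<in> {p}" by simp
  qed
  then show ?thesis using ps unfolding wb_minimal_def by blast
qed

theorem mainTheorem16:
  fixes R :: "('k, 'r) ring_scheme"
    and M :: "'p::order \<Rightarrow> ('k, 'm) module"
    and f :: "'p \<Rightarrow> 'p \<Rightarrow> 'm \<Rightarrow> 'm"
  assumes cont: "continuous_poset TYPE('p)"
    and irrefl: "\<forall>p::'p. \<not> way_below p p"
    and pm: "pers_module R M f"
  shows "((\<exists>p. wb_minimal (supp M) p) \<longrightarrow> \<not> lower_semicontinuous M f)
       \<and> ((\<exists>p. wb_maximal (supp M) p) \<longrightarrow> \<not> upper_semicontinuous M f)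
       \<and> ((supp M \<noteq> {} \<and> finitely_generated R M f) \<longrightarrow> \<not> lower_semicontinuous M f)
       \<and> ((supp M \<noteq> {} \<and> finitely_cogenerated R M f) \<longrightarrow> \<not> upper_semicontinuous M f)"
proof (intro conjI impI notI)
  assume "\<exists>p. wb_minimal (supp M) p" "lower_semicontinuous M f"
  then show False using part1[OF pm irrefl] by blast
next
  assume "\<exists>p. wb_maximal (supp M) p" "upper_semicontinuous M f"
  then show False using part2[OF pm irrefl] by blast
next
  assume "supp M \<noteq> {} \<and> finitely_generated R M f" "lower_semicontinuous M f"
  then show False using part1[OF pm irrefl] part3[OF pm] by blast
next
  assume "supp M \<noteq> {} \<and> finitely_cogenerated R M f" "upper_semicontinuous M f"
  then show False using part2[OF pm irrefl] part4[OF pm] by blast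
qed

end
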